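(* Let $\phi\colon A\to K[\tau]$ be a Drinfeld $A$-module over a finitely generated field $K$ over $\mathbb{F}_p$, let $t\in A$ be non-constant, and for an integer $d$ let $M_d$ be the $\mathbb{F}_p[t]$-submodule of $\mathrm{End}_{K^{\mathrm{sep}}}(\phi)$ generated by all $u\in\mathrm{End}_{K^{\mathrm{sep}}}(\phi)$ with $\deg_\tau(u)\le d$. If $M_d$ has finite index in $\mathrm{End}_{K^{\mathrm{sep}}}(\phi)$ (i.e. has the same $\mathbb{F}_p[t]$-rank), then $M_d=\mathrm{End}_{K^{\mathrm{sep}}}(\phi)$.
   Context: $A$ is an admissible coefficient ring; $K[\tau]$ is the twisted polynomial ring with $\tau x=x^p\tau$; a Drinfeld $A$-module is a ring homomorphism $\phi\colon A\to K[\tau]$ with image not in $K$; $\mathrm{End}_{K^{\mathrm{sep}}}(\phi)$ is the centralizer of $\phi(A)$ in $K^{\mathrm{sep}}[\tau]$. $K^{\mathrm{sep}}[\tau]$ is regarded as an $\mathbb{F}_p[t]$-module via $(a,u)\mapsto\phi_au$. *)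

theory Defs
  imports "HOL-Computational_Algebra.Computational_Algebra"
begin

inductive_set ring_gen :: "'a::comm_ring_1 set \<Rightarrow> 'a set" for S where
  rg_base: "x \<in> S \<Longrightarrow> x \<in> ring_gen S"
| rg_zero: "0 \<in> ring_gen S"
| rg_one: "1 \<in> ring_gen S"
| rg_add: "x \<in> ring_gen S \<Longrightarrow> y \<in> ring_gen S \<Longrightarrow> x + y \<in> ring_gen S"
| rg_uminus: "x \<in> ring_gen S \<Longrightarrow> - x \<in> ring_gen S"
| rg_mult: "x \<in> ring_gen S \<Longrightarrow> y \<in> ring_gen S \<Longrightarrow> x * y \<in> ring_gen S"

inductive_set field_gen :: "'a::field set \<Rightarrow> 'a set" for S where
  fg_base: "x \<in> S \<Longrightarrow> x \<in> field_gen S"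
| fg_zero: "0 \<in> field_gen S"
| fg_one: "1 \<in> field_gen S"
| fg_add: "x \<in> field_gen S \<Longrightarrow> y \<in> field_gen S \<Longrightarrow> x + y \<in> field_gen S"
| fg_uminus: "x \<in> field_gen S \<Longrightarrow> - x \<in> field_gen S"
| fg_mult: "x \<in> field_gen S \<Longrightarrow> y \<in> field_gen S \<Longrightarrow> x * y \<in> field_gen S"
| fg_inverse: "x \<in> field_gen S \<Longrightarrow> inverse x \<in> field_gen S"

text \<open>K is a finitely generated field over F_p (inside the ambient field 'L of char p):
  it is the subfield generated by a finite set (the prime field is contained automatically).\<close>
definition fin_gen_field :: "'a::field set \<Rightarrow> bool" where
  "fin_gen_field K \<longleftrightarrow> (\<exists>S. finite S \<and> K = field_gen S)"

definition is_ideal :: "'a::comm_ring_1 set \<Rightarrow> bool" where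
  "is_ideal I \<longleftrightarrow> 0 \<in> I \<and> (\<forall>x\<in>I. \<forall>y\<in>I. x + y \<in> I) \<and> (\<forall>x\<in>I. \<forall>a. a * x \<in> I)"

definition prime_ideal :: "'a::comm_ring_1 set \<Rightarrow> bool" where
  "prime_ideal P \<longleftrightarrow> is_ideal P \<and> P \<noteq> UNIV \<and> (\<forall>a b. a * b \<in> P \<longrightarrow> a \<in> P \<or> b \<in> P)"

definition maximal_ideal :: "'a::comm_ring_1 set \<Rightarrow> bool" where
  "maximal_ideal M \<longleftrightarrow> is_ideal M \<and> M \<noteq> UNIV \<and>
     (\<forall>J. is_ideal J \<and> M \<subseteq> J \<longrightarrow> J = M \<or> J = UNIV)"

text \<open>Integrally closed: if x/y (y \<noteq> 0) satisfies a monic polynomial f of degree n over A,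
  i.e. the homogenised relation holds, then y divides x.\<close>
definition integrally_closed :: "'a::idom itself \<Rightarrow> bool" where
  "integrally_closed _ \<longleftrightarrow> (\<forall>(f::'a poly) (x::'a) y. y \<noteq> 0 \<longrightarrow> lead_coeff f = 1 \<longrightarrow>
      (\<Sum>i\<le>degree f. coeff f i * x ^ i * y ^ (degree f - i)) = 0 \<longrightarrow> y dvd x)"

text \<open>Admissible coefficient ring: the ring of elements of a global function field over F_p
  regular away from one fixed place \<infinity>.  Equivalently (used here): a Dedekind domain of
  characteristic p that is finitely generated as a ring (i.e. as F_p-algebra), is not a field,
  and has a finite unit group (exactly one place at infinity).\<close>
definition admissible_coeff_ring :: "'a::idom itself \<Rightarrow> nat \<Rightarrow> bool" where
  "admissible_coeff_ring T p \<longleftrightarrow>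
     prime p \<and> CHAR('a) = p \<and>
     (\<exists>S::'a set. finite S \<and> ring_gen S = UNIV) \<and>
     (\<exists>a::'a. a \<noteq> 0 \<and> \<not> a dvd 1) \<and>
     (\<forall>P::'a set. prime_ideal P \<and> P \<noteq> {0} \<longrightarrow> maximal_ideal P) \<and>
     integrally_closed T \<and>
     finite {u::'a. u dvd 1}"

text \<open>Constant elements of A: those algebraic over the prime field F_p.\<close>
definition constant_elem :: "'a::comm_ring_1 \<Rightarrow> bool" where
  "constant_elem a \<longleftrightarrow> (\<exists>f::nat poly. (\<exists>i. \<not> CHAR('a) dvd coeff f i) \<and>
       poly (map_poly of_nat f) a = (0::'a))"

section \<open>Twisted polynomials K[\<tau>], \<tau> x = x^p \<tau>, represented as 'L poly (coefficient of \<tau>^i)\<close>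

definition tmult :: "'L::field poly \<Rightarrow> 'L poly \<Rightarrow> 'L poly" where
  "tmult f g = (\<Sum>i\<le>degree f. \<Sum>j\<le>degree g.
       monom (coeff f i * coeff g j ^ (CHAR('L) ^ i)) (i + j))"

definition twisted_over :: "'L::field set \<Rightarrow> 'L poly set" where
  "twisted_over K = {u. \<forall>i. coeff u i \<in> K}"

definition alg_closed :: "'L::field itself \<Rightarrow> bool" where
  "alg_closed _ \<longleftrightarrow> (\<forall>f::'L poly. degree f > 0 \<longrightarrow> (\<exists>x. poly f x = 0))"

definition sep_closure :: "'L::field set \<Rightarrow> 'L set" where
  "sep_closure K = {x. \<exists>f. f \<noteq> 0 \<and> (\<forall>i. coeff f i \<in> K) \<and> coprime f (pderiv f) \<and> poly f x = 0}"

definition drinfeld_module :: "'L::field set \<Rightarrow> ('a::comm_ring_1 \<Rightarrow> 'L poly) \<Rightarrow> bool" where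
  "drinfeld_module K \<phi> \<longleftrightarrow>
     (\<forall>a. \<phi> a \<in> twisted_over K) \<and>
     \<phi> 1 = 1 \<and> (\<forall>a b. \<phi> (a + b) = \<phi> a + \<phi> b) \<and> (\<forall>a b. \<phi> (a * b) = tmult (\<phi> a) (\<phi> b)) \<and>
     (\<exists>a. degree (\<phi> a) > 0)"

definition End_sep :: "'L::field set \<Rightarrow> ('a \<Rightarrow> 'L poly) \<Rightarrow> 'L poly set" where
  "End_sep K \<phi> = {u \<in> twisted_over (sep_closure K). \<forall>a. tmult u (\<phi> a) = tmult (\<phi> a) u}"

text \<open>F_p[t]-submodule of K^sep[\<tau>] (action (a,u) \<mapsto> \<phi>_a u) generated by a set G.\<close>
inductive_set Fpt_span :: "('a::comm_ring_1 \<Rightarrow> 'L::field poly) \<Rightarrow> 'a \<Rightarrow> 'L poly set \<Rightarrow> 'L poly set"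
  for \<phi> t G where
  sp_zero: "0 \<in> Fpt_span \<phi> t G"
| sp_base: "u \<in> G \<Longrightarrow> u \<in> Fpt_span \<phi> t G"
| sp_add: "u \<in> Fpt_span \<phi> t G \<Longrightarrow> v \<in> Fpt_span \<phi> t G \<Longrightarrow> u + v \<in> Fpt_span \<phi> t G"
| sp_smult: "a \<in> ring_gen {t} \<Longrightarrow> u \<in> Fpt_span \<phi> t G \<Longrightarrow> tmult (\<phi> a) u \<in> Fpt_span \<phi> t G"

definition M_deg :: "'L::field set \<Rightarrow> ('a::comm_ring_1 \<Rightarrow> 'L poly) \<Rightarrow> 'a \<Rightarrow> int \<Rightarrow> 'L poly set" where
  "M_deg K \<phi> t d = Fpt_span \<phi> t {u \<in> End_sep K \<phi>. int (degree u) \<le> d}"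

definition finite_index :: "'b::ab_group_add set \<Rightarrow> 'b set \<Rightarrow> bool" where
  "finite_index M E \<longleftrightarrow> finite ((\<lambda>x. (\<lambda>m. x + m) ` M) ` E)"

end

theory Submission
  imports Defs
begin

lemma diag_sum_aux:
  fixes F :: "nat \<Rightarrow> nat \<Rightarrow> 'b::comm_monoid_add"
  assumes "\<And>i j. i > a \<Longrightarrow> F i j = 0" "\<And>i j. j > b \<Longrightarrow> F i j = 0"
  shows "(\<Sum>i\<le>a. \<Sum>j\<le>b. if i + j = n then F i j else 0) = (\<Sum>i\<le>n. F i (n - i))"
proof -
  have "(\<Sum>i\<le>a. \<Sum>j\<le>b. if i + j = n then F i j else 0) = (\<Sum>i\<le>a. if i \<le> n then F i (n - i) else 0)"
  proof (rule sum.cong[OF refl])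
    fix i assume "i \<in> {..a}"
    show "(\<Sum>j\<le>b. if i + j = n then F i j else 0) = (if i \<le> n then F i (n - i) else 0)"
    proof (cases "i \<le> n \<and> n - i \<le> b")
      case True
      have "(\<Sum>j\<le>b. if i + j = n then F i j else 0) = (\<Sum>j\<le>b. if j = n - i then F i j else 0)"
        by (rule sum.cong) (use True in auto)
      also have "\<dots> = F i (n - i)" using True by (simp add: sum.delta)
      finally show ?thesis using True by simp
    next
      case False
      have "(\<Sum>j\<le>b. if i + j = n then F i j else 0) = 0"
        by (rule sum.neutral) (use False in auto)
      moreover have "i \<le> n \<Longrightarrow> F i (n - i) = 0" using False assms(2) by auto
      ultimately show ?thesis by auto
    qed
  qed
  also have "\<dots> = (\<Sum>i\<le>max a n. if i \<le> n then F i (n - i) else 0)"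
    by (rule sum.mono_neutral_left) (auto simp: assms(1))
  also have "\<dots> = (\<Sum>i\<le>n. if i \<le> n then F i (n - i) else 0)"
    by (rule sum.mono_neutral_right) auto
  also have "\<dots> = (\<Sum>i\<le>n. F i (n - i))" by simp
  finally show ?thesis .
qed

lemma coeff_tmult:
  fixes f g :: "'L::field poly"
  assumes "prime CHAR('L)"
  shows "coeff (tmult f g) n = (\<Sum>i\<le>n. coeff f i * coeff g (n - i) ^ (CHAR('L) ^ i))"
proof -
  have pos: "CHAR('L) ^ i > 0" for i using assms prime_gt_0_nat by auto
  have "coeff (tmult f g) n = (\<Sum>i\<le>degree f. \<Sum>j\<le>degree g.
       if i + j = n then coeff f i * coeff g j ^ (CHAR('L) ^ i) else 0)"
    by (simp add: tmult_def coeff_sum coeff_monom eq_commute)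
  also have "\<dots> = (\<Sum>i\<le>n. coeff f i * coeff g (n - i) ^ (CHAR('L) ^ i))"
    by (rule diag_sum_aux) (auto simp: coeff_eq_0 pos assms prime_gt_0_nat)
  finally show ?thesis .
qed

context
  fixes dummy :: "'L::field itself"
  assumes pc: "prime CHAR('L)"
begin

lemma frob_add: "((x::'L) + y) ^ (CHAR('L) ^ i) = x ^ (CHAR('L) ^ i) + y ^ (CHAR('L) ^ i)"
  by (rule freshmans_dream'[OF pc refl])

lemma frob_sum: "(sum (f::'b \<Rightarrow> 'L) A) ^ (CHAR('L) ^ i) = (\<Sum>x\<in>A. f x ^ (CHAR('L) ^ i))"
  by (rule freshmans_dream_sum'[OF pc refl])

lemma frob_pos: "CHAR('L) ^ i > 0"
  using pc prime_gt_0_nat by auto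

lemma charpos: "CHAR('L) > 0"
  using pc prime_gt_0_nat by auto

lemma frob_0: "(0::'L) ^ (CHAR('L) ^ i) = 0"
  using frob_pos by simp

lemma frob_minus: "(- (x::'L)) ^ (CHAR('L) ^ i) = - (x ^ (CHAR('L) ^ i))"
proof -
  have "(x + - x) ^ (CHAR('L) ^ i) = x ^ (CHAR('L) ^ i) + (- x) ^ (CHAR('L) ^ i)"
    by (rule frob_add)
  then have "x ^ (CHAR('L) ^ i) + (- x) ^ (CHAR('L) ^ i) = 0" using frob_0 by simp
  then show ?thesis by (metis add.inverse_unique)
qed

lemma frob_diff: "((x::'L) - y) ^ (CHAR('L) ^ i) = x ^ (CHAR('L) ^ i) - y ^ (CHAR('L) ^ i)"
  using frob_add[of x "-y" i] frob_minus[of y i] by simp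

lemma frob_inj: "(x::'L) ^ (CHAR('L) ^ i) = y ^ (CHAR('L) ^ i) \<Longrightarrow> x = y"
  using frob_diff[of x y i] frob_pos[of i] by simp

lemma frob_eq_0: "(x::'L) ^ (CHAR('L) ^ i) = 0 \<longleftrightarrow> x = 0"
  using frob_pos[of i] by simp

lemma ctm: "coeff (tmult f g) n = (\<Sum>i\<le>n. coeff f i * coeff g (n - i) ^ (CHAR('L) ^ i))"
  for f g :: "'L poly"
  by (rule coeff_tmult[OF pc])

lemma tmult_0_left [simp]: "tmult 0 (g::'L poly) = 0"
  by (rule poly_eqI) (simp add: ctm)

lemma tmult_0_right [simp]: "tmult (f::'L poly) 0 = 0"
  by (rule poly_eqI) (simp add: ctm frob_0)

lemma tmult_const_left: "tmult [:c:] (g::'L poly) = smult c g"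
proof (rule poly_eqI)
  fix n
  have "coeff (tmult [:c:] g) n = (\<Sum>i\<le>n. coeff [:c:] i * coeff g (n - i) ^ (CHAR('L) ^ i))"
    by (simp add: ctm)
  also have "\<dots> = (\<Sum>i\<le>n. if i = 0 then c * coeff g n else 0)"
    by (rule sum.cong) (auto simp: coeff_pCons split: nat.split)
  finally have "coeff (tmult [:c:] g) n = (\<Sum>i\<le>n. if i = 0 then c * coeff g n else 0)" .
  then show "coeff (tmult [:c:] g) n = coeff (smult c g) n" by simp
qed

lemma tmult_1_left [simp]: "tmult 1 (g::'L poly) = g"
  using tmult_const_left[of 1 g] by (simp add: one_pCons)

lemma tmult_1_right [simp]: "tmult (f::'L poly) 1 = f"
proof (rule poly_eqI)
  fix n
  have "coeff (tmult f 1) n = (\<Sum>i\<le>n. coeff f i * coeff 1 (n - i) ^ (CHAR('L) ^ i))"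
    by (simp add: ctm)
  also have "\<dots> = (\<Sum>i\<le>n. if i = n then coeff f n else 0)"
    by (rule sum.cong) (auto simp: frob_0)
  finally have "coeff (tmult f 1) n = (\<Sum>i\<le>n. if i = n then coeff f n else 0)" .
  then show "coeff (tmult f 1) n = coeff f n" by simp
qed

lemma tmult_add_left: "tmult (f + g) (h::'L poly) = tmult f h + tmult g h"
  by (rule poly_eqI) (simp add: ctm algebra_simps sum.distrib)

lemma tmult_add_right: "tmult f (g + h::'L poly) = tmult f g + tmult f h"
  by (rule poly_eqI) (simp add: ctm algebra_simps sum.distrib frob_add)

lemma tmult_minus_left: "tmult (- f) (h::'L poly) = - tmult f h"
  by (rule poly_eqI) (simp add: ctm sum_negf)

lemma tmult_minus_right: "tmult f (- h::'L poly) = - tmult f h"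
  by (rule poly_eqI) (simp add: ctm sum_negf frob_minus)

lemma tmult_diff_left: "tmult (f - g) (h::'L poly) = tmult f h - tmult g h"
  using tmult_add_left[of f "-g" h] tmult_minus_left[of g h] by simp

lemma tmult_diff_right: "tmult f (g - h::'L poly) = tmult f g - tmult f h"
  using tmult_add_right[of f g "-h"] tmult_minus_right[of f h] by simp

lemma tmult_sum_left: "tmult (sum F A) (h::'L poly) = (\<Sum>x\<in>A. tmult (F x) h)"
  by (induction A rule: infinite_finite_induct) (auto simp: tmult_add_left)

lemma tmult_sum_right: "tmult f (sum F A :: 'L poly) = (\<Sum>x\<in>A. tmult f (F x))"
  by (induction A rule: infinite_finite_induct) (auto simp: tmult_add_right)

lemma tmult_assoc: "tmult (tmult f g) h = tmult f (tmult g (h::'L poly))"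
proof (rule poly_eqI)
  fix n
  define P where "P = (\<lambda>i. CHAR('L) ^ i)"
  define X where "X = (\<lambda>a b. coeff f a * coeff g b ^ P a * coeff h (n - a - b) ^ P (a + b))"
  have "coeff (tmult (tmult f g) h) n = (\<Sum>k\<le>n. \<Sum>a\<le>k. coeff f a * coeff g (k - a) ^ P a * coeff h (n - k) ^ P k)"
    by (simp add: ctm P_def sum_distrib_right)
  also have "\<dots> = (\<Sum>k\<le>n. \<Sum>a\<le>k. X a (k - a))"
    by (rule sum.cong[OF refl], rule sum.cong[OF refl]) (auto simp: X_def)
  also have "\<dots> = (\<Sum>(a,b)\<in>{(i,j). i+j \<le> n}. X a b)"
    by (rule sum.triangle_reindex_eq[symmetric])
  also have "{(i,j). i+j \<le> n} = Sigma {..n} (\<lambda>a. {..n-a})" by auto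
  also have "(\<Sum>(a,b)\<in>Sigma {..n} (\<lambda>a. {..n-a}). X a b) = (\<Sum>a\<le>n. \<Sum>b\<le>n-a. X a b)"
    by (rule sum.Sigma[symmetric]) auto
  also have "\<dots> = coeff (tmult f (tmult g h)) n"
  proof -
    have "coeff (tmult f (tmult g h)) n = (\<Sum>a\<le>n. coeff f a * (\<Sum>b\<le>n - a. coeff g b * coeff h (n - a - b) ^ P b) ^ P a)"
      by (simp add: ctm P_def)
    also have "\<dots> = (\<Sum>a\<le>n. \<Sum>b\<le>n - a. X a b)"
    proof (rule sum.cong[OF refl])
      fix a
      have "(\<Sum>b\<le>n - a. coeff g b * coeff h (n - a - b) ^ P b) ^ P a = (\<Sum>b\<le>n - a. (coeff g b * coeff h (n - a - b) ^ P b) ^ P a)"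
        unfolding P_def by (rule frob_sum)
      also have "\<dots> = (\<Sum>b\<le>n - a. coeff g b ^ P a * coeff h (n - a - b) ^ P (a + b))"
        by (rule sum.cong[OF refl]) (simp add: P_def power_mult_distrib mult.commute power_add flip: power_mult)
      finally show "coeff f a * (\<Sum>b\<le>n - a. coeff g b * coeff h (n - a - b) ^ P b) ^ P a = (\<Sum>b\<le>n - a. X a b)"
        by (simp add: X_def sum_distrib_left mult.assoc)
    qed
    finally show ?thesis by simp
  qed
  finally show "coeff (tmult (tmult f g) h) n = coeff (tmult f (tmult g h)) n" .
qed

lemma coeff_tmult_high: "n > degree f + degree g \<Longrightarrow> coeff (tmult f g) n = (0::'L)"
  for f g :: "'L poly"
  unfolding ctm
proof (rule sum.neutral, rule ballI)
  fix i assume "n > degree f + degree g" "i \<in> {..n}"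
  then have "i > degree f \<or> n - i > degree g" by auto
  then show "coeff f i * coeff g (n - i) ^ CHAR('L) ^ i = 0"
    by (auto simp: coeff_eq_0 frob_0 charpos)
qed

lemma coeff_tmult_top: "coeff (tmult f g) (degree f + degree g) = lead_coeff f * lead_coeff g ^ (CHAR('L) ^ degree f)"
  for f g :: "'L poly"
proof -
  have "coeff (tmult f g) (degree f + degree g) = (\<Sum>i\<le>degree f + degree g. if i = degree f then lead_coeff f * lead_coeff g ^ (CHAR('L) ^ degree f) else 0)"
    unfolding ctm
  proof (rule sum.cong[OF refl])
    fix i assume "i \<in> {..degree f + degree g}"
    show "coeff f i * coeff g (degree f + degree g - i) ^ CHAR('L) ^ i = (if i = degree f then lead_coeff f * lead_coeff g ^ (CHAR('L) ^ degree f) else 0)"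
    proof (cases "i = degree f")
      case False
      then have "i > degree f \<or> degree f + degree g - i > degree g" by auto
      then show ?thesis using False by (auto simp: coeff_eq_0 frob_0 charpos)
    qed simp
  qed
  then show ?thesis by simp
qed

lemma degree_tmult_le: "degree (tmult f g) \<le> degree f + degree (g::'L poly)"
  by (rule degree_le) (auto simp: coeff_tmult_high)

lemma degree_tmult: "f \<noteq> 0 \<Longrightarrow> g \<noteq> 0 \<Longrightarrow> degree (tmult f g) = degree f + degree (g::'L poly)"
  by (rule antisym[OF degree_tmult_le], rule le_degree) (simp add: coeff_tmult_top frob_eq_0)

lemma lead_coeff_tmult: "f \<noteq> 0 \<Longrightarrow> g \<noteq> 0 \<Longrightarrow> lead_coeff (tmult f g) = lead_coeff f * lead_coeff (g::'L poly) ^ (CHAR('L) ^ degree f)"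
  by (simp add: degree_tmult coeff_tmult_top)

lemma tmult_eq_0_iff: "tmult f g = 0 \<longleftrightarrow> f = 0 \<or> g = (0::'L poly)"
proof
  assume "tmult f g = 0"
  show "f = 0 \<or> g = 0"
  proof (rule ccontr)
    assume "\<not> (f = 0 \<or> g = 0)"
    then have "lead_coeff (tmult f g) \<noteq> 0" by (simp add: lead_coeff_tmult frob_eq_0)
    with \<open>tmult f g = 0\<close> show False by simp
  qed
qed auto

lemma tmult_cancel_right: "tmult X f = tmult Y f \<Longrightarrow> f \<noteq> 0 \<Longrightarrow> X = (Y::'L poly)"
  using tmult_diff_left[of X Y f] tmult_eq_0_iff[of "X - Y" f] by simp

lemma tmult_cancel_left: "tmult f X = tmult f Y \<Longrightarrow> f \<noteq> 0 \<Longrightarrow> X = (Y::'L poly)"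
  using tmult_diff_right[of f X Y] tmult_eq_0_iff[of f "X - Y"] by simp

lemma coeff_tmult_0: "coeff (tmult f g) 0 = coeff f 0 * coeff (g::'L poly) 0"
  by (simp add: ctm)

end

definition sfield :: "'L::field set \<Rightarrow> bool" where
  "sfield K \<longleftrightarrow> 0 \<in> K \<and> 1 \<in> K \<and> (\<forall>x\<in>K. \<forall>y\<in>K. x + y \<in> K \<and> x * y \<in> K) \<and> (\<forall>x\<in>K. - x \<in> K \<and> inverse x \<in> K)"

lemma sfield_field_gen: "sfield (field_gen S)"
  unfolding sfield_def by (auto intro: field_gen.intros)

context
  fixes K :: "'L::field set"
  assumes sK: "sfield K"
begin

lemma sK0: "0 \<in> K" and sK1: "1 \<in> K" and sKadd: "x \<in> K \<Longrightarrow> y \<in> K \<Longrightarrow> x + y \<in> K"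
  and sKmult: "x \<in> K \<Longrightarrow> y \<in> K \<Longrightarrow> x * y \<in> K" and sKminus: "x \<in> K \<Longrightarrow> - x \<in> K"
  and sKinv: "x \<in> K \<Longrightarrow> inverse x \<in> K"
  using sK unfolding sfield_def by auto

lemma sKdiff: "x \<in> K \<Longrightarrow> y \<in> K \<Longrightarrow> x - y \<in> K"
  using sKadd[of x "-y"] sKminus[of y] by simp

lemma sKdiv: "x \<in> K \<Longrightarrow> y \<in> K \<Longrightarrow> x / y \<in> K"
  using sKmult[of x "inverse y"] sKinv[of y] by (simp add: divide_inverse)

lemma sKpow: "x \<in> K \<Longrightarrow> x ^ n \<in> K"
  by (induction n) (auto simp: sK1 sKmult)

lemma sKsum: "(\<And>i. i \<in> A \<Longrightarrow> f i \<in> K) \<Longrightarrow> sum f A \<in> K"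
  by (induction A rule: infinite_finite_induct) (auto simp: sK0 sKadd)

lemma tw_0: "0 \<in> twisted_over K" and tw_1: "1 \<in> twisted_over K"
  by (auto simp: twisted_over_def sK0 sK1 coeff_1)

lemma tw_add: "f \<in> twisted_over K \<Longrightarrow> g \<in> twisted_over K \<Longrightarrow> f + g \<in> twisted_over K"
  by (auto simp: twisted_over_def sKadd)

lemma tw_minus: "f \<in> twisted_over K \<Longrightarrow> - f \<in> twisted_over K"
  by (auto simp: twisted_over_def sKminus)

lemma tw_diff: "f \<in> twisted_over K \<Longrightarrow> g \<in> twisted_over K \<Longrightarrow> f - g \<in> twisted_over K"
  by (auto simp: twisted_over_def sKdiff)

lemma tw_monom: "c \<in> K \<Longrightarrow> monom c n \<in> twisted_over K"
  by (auto simp: twisted_over_def coeff_monom sK0)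

lemma tw_const: "c \<in> K \<Longrightarrow> [:c:] \<in> twisted_over K"
  by (auto simp: twisted_over_def coeff_pCons sK0 split: nat.split)

lemma tw_coeff: "f \<in> twisted_over K \<Longrightarrow> coeff f i \<in> K"
  by (auto simp: twisted_over_def)

lemma tw_tmult: "prime CHAR('L) \<Longrightarrow> f \<in> twisted_over K \<Longrightarrow> g \<in> twisted_over K \<Longrightarrow> tmult f g \<in> twisted_over K"
  unfolding twisted_over_def by (auto simp: coeff_tmult intro!: sKsum sKmult sKpow)

end

definition teval :: "'L::field poly \<Rightarrow> 'L \<Rightarrow> 'L" where
  "teval f x = (\<Sum>i\<le>degree f. coeff f i * x ^ (CHAR('L) ^ i))"

lemma teval_bound: "degree (f::'L::field poly) \<le> N \<Longrightarrow> teval f x = (\<Sum>i\<le>N. coeff f i * x ^ (CHAR('L) ^ i))"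
  unfolding teval_def by (rule sum.mono_neutral_left) (auto simp: coeff_eq_0)

lemma teval_0 [simp]: "teval 0 (x::'L::field) = 0"
  by (simp add: teval_def)

lemma teval_add: "teval (f + g) (x::'L::field) = teval f x + teval g x"
proof -
  define N where "N = max (degree f) (degree g)"
  have "degree (f + g) \<le> N" "degree f \<le> N" "degree g \<le> N"
    by (auto simp: N_def degree_add_le)
  then show ?thesis by (simp add: teval_bound[of _ N] algebra_simps sum.distrib)
qed

lemma teval_minus: "teval (- f) (x::'L::field) = - teval f x"
  by (simp add: teval_def sum_negf)

lemma teval_diff: "teval (f - g) (x::'L::field) = teval f x - teval g x"
  using teval_add[of f "-g" x] teval_minus[of g x] by simp

lemma teval_sum: "teval (sum F A) (x::'L::field) = (\<Sum>a\<in>A. teval (F a) x)"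
  by (induction A rule: infinite_finite_induct) (auto simp: teval_add)

lemma teval_const: "teval [:c:] (x::'L::field) = c * x"
  by (simp add: teval_def)

lemma teval_monom: "teval (monom c n) (x::'L::field) = c * x ^ (CHAR('L) ^ n)"
proof -
  have "teval (monom c n) x = (\<Sum>i\<le>n. coeff (monom c n) i * x ^ (CHAR('L) ^ i))"
    by (rule teval_bound) (simp add: degree_monom_le)
  also have "\<dots> = (\<Sum>i\<le>n. if i = n then c * x ^ (CHAR('L) ^ n) else 0)"
    by (rule sum.cong) (auto simp: coeff_monom)
  finally show ?thesis by simp
qed

context
  fixes dummy :: "'L::field itself"
  assumes pc: "prime CHAR('L)"
begin

lemma teval_addx: "teval f (x + y) = teval f x + teval f (y::'L)"
  by (simp add: teval_def frob_add[OF pc] algebra_simps sum.distrib)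

lemma teval_minusx: "teval f (- x) = - teval f (x::'L)"
  by (simp add: teval_def frob_minus[OF pc] sum_negf)

lemma teval_at0 [simp]: "teval f (0::'L) = 0"
  by (simp add: teval_def frob_0[OF pc])

lemma teval_sumx: "teval f (sum F A) = (\<Sum>a\<in>A. teval f (F a :: 'L))"
  by (induction A rule: infinite_finite_induct) (auto simp: teval_addx)

lemma teval_tmult: "teval (tmult f g) x = teval f (teval g (x::'L))"
proof -
  define P where "P = (\<lambda>i. CHAR('L) ^ i)"
  define N where "N = degree f + degree g"
  define G where "G = (\<lambda>i j. coeff f i * coeff g j ^ P i * x ^ P (i + j))"
  have "teval (tmult f g) x = (\<Sum>n\<le>N. coeff (tmult f g) n * x ^ P n)"
    unfolding P_def by (rule teval_bound) (simp add: N_def degree_tmult_le[OF pc])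
  also have "\<dots> = (\<Sum>n\<le>N. \<Sum>i\<le>n. G i (n - i))"
    by (rule sum.cong[OF refl]) (simp add: coeff_tmult[OF pc] sum_distrib_right G_def P_def)
  also have "\<dots> = (\<Sum>(i,j)\<in>{(i,j). i+j \<le> N}. G i j)"
    by (rule sum.triangle_reindex_eq[symmetric])
  also have "\<dots> = (\<Sum>(i,j)\<in>{..degree f} \<times> {..degree g}. G i j)"
  proof (rule sum.mono_neutral_right)
    show "finite {(i,j). i+j \<le> N}"
      by (rule finite_subset[of _ "{..N} \<times> {..N}"]) auto
    show "{..degree f} \<times> {..degree g} \<subseteq> {(i,j). i+j \<le> N}" by (auto simp: N_def)
    show "\<forall>i\<in>{(i, j). i + j \<le> N} - {..degree f} \<times> {..degree g}. (case i of (i, j) \<Rightarrow> G i j) = 0"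
      by (auto simp: G_def P_def frob_0[OF pc] charpos[OF pc] intro: le_degree)
  qed
  also have "\<dots> = (\<Sum>i\<le>degree f. \<Sum>j\<le>degree g. G i j)"
    by (rule sum.cartesian_product[symmetric])
  also have "\<dots> = teval f (teval g x)"
    unfolding teval_def
  proof (rule sum.cong[OF refl])
    fix i
    have "coeff f i * (\<Sum>j\<le>degree g. coeff g j * x ^ P j) ^ P i = coeff f i * (\<Sum>j\<le>degree g. (coeff g j * x ^ P j) ^ P i)"
      unfolding P_def by (simp add: frob_sum[OF pc])
    also have "\<dots> = (\<Sum>j\<le>degree g. G i j)"
      by (simp add: sum_distrib_left G_def power_mult_distrib P_def power_add mult.assoc mult.commute[of "CHAR('L) ^ i"] flip: power_mult)
    finally show "(\<Sum>j\<le>degree g. G i j) = coeff f i * (\<Sum>j\<le>degree g. coeff g j * x ^ (CHAR('L) ^ j)) ^ (CHAR('L) ^ i)"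
      unfolding P_def by simp
  qed
  finally show ?thesis .
qed

lemma tdiv:
  assumes sK: "sfield K" and g: "g \<in> twisted_over K" "g \<noteq> (0::'L poly)"
  shows "f \<in> twisted_over K \<Longrightarrow> \<exists>q r. q \<in> twisted_over K \<and> r \<in> twisted_over K \<and> f = tmult q g + r \<and> (r = 0 \<or> degree r < degree g)"
proof (induction "degree f" arbitrary: f rule: less_induct)
  case less
  show ?case
  proof (cases "f = 0 \<or> degree f < degree g")
    case True
    then show ?thesis using less.prems by (intro exI[of _ 0] exI[of _ f]) (auto simp: tw_0[OF sK] tmult_0_left[OF pc])
  next
    case False
    define m where "m = degree f - degree g"
    define c where "c = lead_coeff f / lead_coeff g ^ (CHAR('L) ^ m)"
    define q0 where "q0 = monom c m"
    have fnz: "f \<noteq> 0" and dfg: "degree g \<le> degree f" using False by auto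
    have lcg: "lead_coeff g \<noteq> 0" using g by simp
    have cnz: "c \<noteq> 0" using fnz lcg by (simp add: c_def frob_eq_0[OF pc])
    have q0nz: "q0 \<noteq> 0" using cnz by (simp add: q0_def)
    have dq: "degree (tmult q0 g) = degree f"
      using degree_tmult[OF pc q0nz g(2)] cnz dfg by (simp add: q0_def degree_monom_eq m_def)
    have lq: "lead_coeff (tmult q0 g) = lead_coeff f"
      using lead_coeff_tmult[OF pc q0nz g(2)] cnz lcg
      by (simp add: q0_def degree_monom_eq c_def frob_eq_0[OF pc])
    have cK: "c \<in> K" unfolding c_def
      using less.prems g(1) by (intro sKdiv[OF sK] sKpow[OF sK] tw_coeff[OF sK])
    have q0K: "q0 \<in> twisted_over K" unfolding q0_def by (rule tw_monom[OF sK cK])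
    define f1 where "f1 = f - tmult q0 g"
    have f1K: "f1 \<in> twisted_over K" unfolding f1_def
      using less.prems g(1) q0K by (intro tw_diff[OF sK] tw_tmult[OF sK pc])
    have "coeff f1 (degree f) = 0" using dq lq by (simp add: f1_def)
    moreover have "degree f1 \<le> degree f" using dq unfolding f1_def
      by (metis degree_diff_le order_refl)
    ultimately have f1cases: "f1 = 0 \<or> degree f1 < degree f"
      by (metis le_neq_implies_less leading_coeff_0_iff)
    show ?thesis
    proof (cases "f1 = 0")
      case True
      then show ?thesis using q0K tw_0[OF sK] by (intro exI[of _ q0] exI[of _ 0]) (auto simp: f1_def)
    next
      case False
      with f1cases have "degree f1 < degree f" by auto
      from less.hyps[OF this f1K] obtain q r where qr: "q \<in> twisted_over K" "r \<in> twisted_over K"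
        "f1 = tmult q g + r" "r = 0 \<or> degree r < degree g" by blast
      have "f = tmult (q0 + q) g + r" using qr(3) by (simp add: f1_def tmult_add_left[OF pc] algebra_simps)
      then show ?thesis using qr q0K by (intro exI[of _ "q0 + q"] exI[of _ r]) (auto simp: tw_add[OF sK])
    qed
  qed
qed

end

context
  fixes K :: "'L::field set"
  assumes sK: "sfield K" and pc: "prime CHAR('L)"
begin

lemma lclm_euclid:
  "g \<in> twisted_over K \<Longrightarrow> g \<noteq> 0 \<Longrightarrow> f \<in> twisted_over K \<Longrightarrow> f \<noteq> 0 \<Longrightarrow>
   \<exists>A B. A \<in> twisted_over K \<and> B \<in> twisted_over K \<and> A \<noteq> 0 \<and> tmult A f = tmult B g \<and>
     (\<forall>X Y. tmult X f = tmult Y g \<longrightarrow> (\<exists>Z. X = tmult Z A))"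
proof (induction "degree g" arbitrary: f g rule: less_induct)
  case less
  obtain q r where qr: "q \<in> twisted_over K" "r \<in> twisted_over K" "f = tmult q g + r" "r = 0 \<or> degree r < degree g"
    using tdiv[OF pc sK less.prems(1,2) less.prems(3)] by blast
  show ?case
  proof (cases "r = 0")
    case True
    show ?thesis
    proof (rule exI[of _ 1], rule exI[of _ q], intro conjI allI impI)
      show "1 \<in> twisted_over K" by (rule tw_1[OF sK])
      show "tmult 1 f = tmult q g" using qr True by (simp add: tmult_1_left[OF pc])
      fix X Y assume "tmult X f = tmult Y g"
      show "\<exists>Z. X = tmult Z 1" by (auto simp: tmult_1_right[OF pc])
    qed (use qr in auto)
  next
    case False
    with qr(4) have dr: "degree r < degree g" by auto
    obtain A' B' where AB: "A' \<in> twisted_over K" "B' \<in> twisted_over K" "A' \<noteq> 0" "tmult A' g = tmult B' r"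
      and univ: "\<forall>X Y. tmult X g = tmult Y r \<longrightarrow> (\<exists>Z. X = tmult Z A')"
      using less.hyps[OF dr qr(2) False less.prems(1,2)] by blast
    have B'nz: "B' \<noteq> 0"
    proof
      assume "B' = 0"
      then have "tmult A' g = 0" using AB(4) by (simp add: tmult_0_left[OF pc])
      then show False using AB(3) less.prems(2) by (simp add: tmult_eq_0_iff[OF pc])
    qed
    have eq: "tmult B' f = tmult (tmult B' q + A') g"
      using AB(4) qr(3) by (simp add: tmult_add_right[OF pc] tmult_add_left[OF pc] tmult_assoc[OF pc])
    show ?thesis
    proof (rule exI[of _ B'], rule exI[of _ "tmult B' q + A'"], intro conjI allI impI)
      show "tmult B' q + A' \<in> twisted_over K"
        using AB qr by (intro tw_add[OF sK] tw_tmult[OF sK pc])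
      fix X Y assume XY: "tmult X f = tmult Y g"
      have "tmult (Y - tmult X q) g = tmult X r"
        using XY qr(3) by (simp add: tmult_diff_left[OF pc] tmult_add_right[OF pc] tmult_assoc[OF pc])
          (metis add_diff_cancel_left')
      then obtain Z where Z: "Y - tmult X q = tmult Z A'" using univ by blast
      have "tmult X r = tmult (tmult Z B') r"
        using \<open>tmult (Y - tmult X q) g = tmult X r\<close> Z AB(4) by (simp add: tmult_assoc[OF pc])
      then have "X = tmult Z B'" using False by (rule tmult_cancel_right[OF pc])
      then show "\<exists>Z. X = tmult Z B'" by blast
    qed (use AB B'nz eq in auto)
  qed
qed

end

context
  fixes dummy :: "'L::field itself"
  assumes pc: "prime CHAR('L)" and perf: "\<forall>a::'L. \<exists>y. y ^ CHAR('L) = a"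
begin

definition proot :: "'L \<Rightarrow> 'L" where "proot a = (SOME y. y ^ CHAR('L) = a)"

lemma proot: "proot a ^ CHAR('L) = a"
  unfolding proot_def using perf by (metis (mono_tags) someI_ex)

lemma proot_0: "proot 0 = 0"
  using proot[of 0] frob_eq_0[OF pc, of _ 1] by simp

definition tsh :: "'L poly \<Rightarrow> 'L poly" where
  "tsh F = Poly (map (\<lambda>i. proot (coeff F (Suc i))) [0..<degree F])"

lemma coeff_tsh: "coeff (tsh F) j = proot (coeff F (Suc j))"
proof (cases "j < degree F")
  case True then show ?thesis by (simp add: tsh_def nth_default_def)
next
  case False then show ?thesis by (simp add: tsh_def nth_default_def coeff_eq_0 proot_0)
qed

lemma tau_tsh: "coeff F 0 = 0 \<Longrightarrow> F = tmult (monom 1 1) (tsh F)"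
proof (rule poly_eqI)
  fix n assume F0: "coeff F 0 = 0"
  have "coeff (tmult (monom 1 1) (tsh F)) n = (\<Sum>i\<le>n. if i = 1 then coeff (tsh F) (n - 1) ^ CHAR('L) else 0)"
    unfolding coeff_tmult[OF pc] by (rule sum.cong) (auto simp: coeff_monom)
  also have "\<dots> = (if n = 0 then 0 else coeff F n)"
    using F0 by (cases n) (auto simp: coeff_tsh proot)
  finally show "coeff F n = coeff (tmult (monom 1 1) (tsh F)) n" using F0 by auto
qed

lemma degree_tsh: "F \<noteq> 0 \<Longrightarrow> coeff F 0 = 0 \<Longrightarrow> degree (tsh F) < degree F"
proof -
  assume "F \<noteq> 0" "coeff F 0 = 0"
  then have "degree F > 0" by (metis leading_coeff_0_iff neq0_conv)
  moreover have "degree (tsh F) \<le> degree F - 1"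
    by (rule degree_le) (auto simp: coeff_tsh coeff_eq_0 proot_0)
  ultimately show ?thesis by linarith
qed

lemma sep_multiple:
  assumes H1: "coeff H1 0 \<noteq> 0" and H2: "coeff H2 0 \<noteq> 0"
  shows "A \<noteq> 0 \<Longrightarrow> tmult A H1 = tmult B H2 \<Longrightarrow> \<exists>A' B'. coeff A' 0 \<noteq> 0 \<and> tmult A' H1 = tmult B' (H2::'L poly)"
proof (induction "degree A" arbitrary: A B rule: less_induct)
  case less
  show ?case
  proof (cases "coeff A 0 = 0")
    case False then show ?thesis using less.prems by blast
  next
    case True
    have "coeff (tmult A H1) 0 = 0" using True by (simp add: coeff_tmult_0[OF pc])
    then have "coeff (tmult B H2) 0 = 0" using less.prems(2) by simp
    then have B0: "coeff B 0 = 0" using H2 by (simp add: coeff_tmult_0[OF pc])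
    have tnz: "monom (1::'L) 1 \<noteq> 0" by simp
    have "tmult (monom 1 1) (tmult (tsh A) H1) = tmult (monom 1 1) (tmult (tsh B) H2)"
      using less.prems(2) tau_tsh[OF True] tau_tsh[OF B0] by (metis tmult_assoc[OF pc])
    then have eq: "tmult (tsh A) H1 = tmult (tsh B) H2" by (rule tmult_cancel_left[OF pc _ tnz])
    have nz: "tsh A \<noteq> 0" using tau_tsh[OF True] less.prems(1) by (auto simp: tmult_0_right[OF pc])
    show ?thesis using less.hyps[OF degree_tsh[OF less.prems(1) True] nz eq] .
  qed
qed

lemma lclm_sep:
  fixes K :: "'L set"
  assumes sK: "sfield K" and H1: "H1 \<in> twisted_over K" "coeff H1 0 \<noteq> 0"
    and H2: "H2 \<in> twisted_over K" "coeff H2 0 \<noteq> 0"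
  shows "\<exists>A B. A \<in> twisted_over K \<and> B \<in> twisted_over K \<and> tmult A H1 = tmult B H2 \<and> coeff A 0 \<noteq> 0"
proof -
  have nz: "H1 \<noteq> 0" "H2 \<noteq> 0" using H1 H2 by auto
  obtain A B where AB: "A \<in> twisted_over K" "B \<in> twisted_over K" "A \<noteq> 0" "tmult A H1 = tmult B H2"
    and univ: "\<forall>X Y. tmult X H1 = tmult Y H2 \<longrightarrow> (\<exists>Z. X = tmult Z A)"
    using lclm_euclid[OF sK pc H2(1) nz(2) H1(1) nz(1)] by blast
  obtain A' B' where "coeff A' 0 \<noteq> 0" "tmult A' H1 = tmult B' H2"
    using sep_multiple[OF H1(2) H2(2) AB(3,4)] by blast
  then obtain Z where "A' = tmult Z A" "coeff A' 0 \<noteq> 0" using univ by blast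
  then have "coeff A 0 \<noteq> 0" by (simp add: coeff_tmult_0[OF pc])
  then show ?thesis using AB by blast
qed

end

definition sroot :: "'L::field set \<Rightarrow> 'L \<Rightarrow> bool" where
  "sroot K x \<longleftrightarrow> (\<exists>H \<in> twisted_over K. coeff H 0 \<noteq> 0 \<and> teval H x = 0)"

lemma pderiv_sum': "pderiv (sum F A) = (\<Sum>a\<in>A. pderiv (F a))"
  by (induction A rule: infinite_finite_induct) (auto simp: pderiv_add)

context
  fixes K :: "'L::field set"
  assumes sK: "sfield K" and pc: "prime CHAR('L)"
begin

lemma sroot_sep: "sroot K x \<Longrightarrow> x \<in> sep_closure K"
proof -
  assume "sroot K x"
  then obtain H where H: "H \<in> twisted_over K" "coeff H 0 \<noteq> 0" "teval H x = 0"
    unfolding sroot_def by blast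
  define P where "P = (\<lambda>i::nat. CHAR('L) ^ i)"
  define f where "f = (\<Sum>i\<le>degree H. monom (coeff H i) (P i))"
  have P1: "P i = 1 \<longleftrightarrow> i = 0" "P i = Suc 0 \<longleftrightarrow> i = 0" for i
    using pc by (auto simp: P_def prime_gt_1_nat)
  have cf: "coeff f n = (\<Sum>i\<le>degree H. if P i = n then coeff H i else 0)" for n
    by (simp add: f_def coeff_sum coeff_monom)
  have "coeff f 1 = (\<Sum>i\<le>degree H. if i = 0 then coeff H 0 else 0)"
    unfolding cf by (rule sum.cong) (auto simp: P1)
  then have "coeff f 1 = coeff H 0" by simp
  then have fnz: "f \<noteq> 0" using H(2) by auto
  have fK: "\<forall>i. coeff f i \<in> K"
    unfolding cf using H(1) by (auto intro!: sKsum[OF sK] simp: sK0[OF sK] tw_coeff[OF sK])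
  have "pderiv f = (\<Sum>i\<le>degree H. monom (of_nat (P i) * coeff H i) (P i - 1))"
    by (simp add: f_def pderiv_sum' pderiv_monom)
  also have "\<dots> = (\<Sum>i\<le>degree H. if i = 0 then [:coeff H 0:] else 0)"
  proof (rule sum.cong[OF refl])
    fix i
    show "monom (of_nat (P i) * coeff H i) (P i - 1) = (if i = 0 then [:coeff H 0:] else 0)"
    proof (cases "i = 0")
      case False
      then have "CHAR('L) dvd P i" by (simp add: P_def)
      then have "(of_nat (P i) :: 'L) = 0" by (simp add: of_nat_eq_0_iff_char_dvd)
      then show ?thesis using False by simp
    qed (simp add: P_def monom_0)
  qed
  also have "\<dots> = [:coeff H 0:]" by simp
  finally have pd: "pderiv f = [:coeff H 0:]" .
  have cop: "coprime f (pderiv f)"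
    unfolding pd by (rule is_unit_right_imp_coprime) (simp add: is_unit_const_poly_iff H(2) dvd_field_iff)
  have "poly f x = teval H x"
    by (simp add: f_def poly_sum poly_monom teval_def P_def)
  then have "poly f x = 0" using H(3) by simp
  then show ?thesis unfolding sep_closure_def using fnz fK cop by blast
qed

lemma sroot_0: "sroot K 0"
  unfolding sroot_def using tw_1[OF sK] by (intro bexI[of _ 1]) (auto simp: teval_at0[OF pc])

lemma sroot_scale: "c \<in> K \<Longrightarrow> sroot K x \<Longrightarrow> sroot K (c * x)"
proof (cases "c = 0")
  case True then show ?thesis using sroot_0 by simp
next
  case False
  assume cK: "c \<in> K" and "sroot K x"
  then obtain H where H: "H \<in> twisted_over K" "coeff H 0 \<noteq> 0" "teval H x = 0"
    unfolding sroot_def by blast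
  define H' where "H' = tmult H [:inverse c:]"
  have "H' \<in> twisted_over K" unfolding H'_def
    using H(1) cK by (intro tw_tmult[OF sK pc] tw_const[OF sK] sKinv[OF sK])
  moreover have "coeff H' 0 \<noteq> 0" using H(2) False by (simp add: H'_def coeff_tmult_0[OF pc])
  moreover have "teval H' (c * x) = 0"
    using H(3) False by (simp add: H'_def teval_tmult[OF pc] teval_const mult.assoc[symmetric])
  ultimately show ?thesis unfolding sroot_def by blast
qed

lemma sroot_minus: "sroot K x \<Longrightarrow> sroot K (- x)"
  using sroot_scale[of "-1" x] sKminus[OF sK sK1[OF sK]] by simp

lemma sroot_frob: "sroot K x \<Longrightarrow> sroot K (x ^ CHAR('L))"
proof -
  assume "sroot K x"
  then obtain H where H: "H \<in> twisted_over K" "coeff H 0 \<noteq> 0" "teval H x = 0"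
    unfolding sroot_def by blast
  define H' where "H' = map_poly (\<lambda>a. a ^ CHAR('L)) H"
  have cH': "coeff H' i = coeff H i ^ CHAR('L)" for i
    unfolding H'_def by (rule coeff_map_poly) (use charpos[OF pc] in simp)
  have "H' \<in> twisted_over K" using H(1) by (auto simp: twisted_over_def cH' sKpow[OF sK])
  moreover have "coeff H' 0 \<noteq> 0" using H(2) charpos[OF pc] by (simp add: cH')
  moreover have "teval H' (x ^ CHAR('L)) = 0"
  proof -
    have dH': "degree H' \<le> degree H" by (rule degree_le) (simp add: cH' coeff_eq_0 charpos[OF pc])
    have "teval H' (x ^ CHAR('L)) = (\<Sum>i\<le>degree H. (coeff H i * x ^ (CHAR('L) ^ i)) ^ (CHAR('L) ^ 1))"
      by (simp add: teval_bound[OF dH'] cH' power_mult_distrib mult.commute flip: power_mult)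
    also have "\<dots> = (teval H x) ^ (CHAR('L) ^ 1)"
      unfolding teval_def by (rule frob_sum[OF pc, symmetric])
    finally show ?thesis using H(3) charpos[OF pc] by simp
  qed
  ultimately show ?thesis unfolding sroot_def by blast
qed

lemma sroot_frobn: "sroot K x \<Longrightarrow> sroot K (x ^ (CHAR('L) ^ j))"
proof (induction j)
  case (Suc j)
  then have "sroot K ((x ^ (CHAR('L) ^ j)) ^ CHAR('L))" by (intro sroot_frob)
  then show ?case by (simp add: power_mult mult.commute flip: power_mult)
qed simp

lemma sroot_pre: "G \<in> twisted_over K \<Longrightarrow> coeff G 0 \<noteq> 0 \<Longrightarrow> sroot K (teval G x) \<Longrightarrow> sroot K x"
proof -
  assume G: "G \<in> twisted_over K" "coeff G 0 \<noteq> 0" and "sroot K (teval G x)"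
  then obtain H where H: "H \<in> twisted_over K" "coeff H 0 \<noteq> 0" "teval H (teval G x) = 0"
    unfolding sroot_def by blast
  have "tmult H G \<in> twisted_over K" using H(1) G(1) by (rule tw_tmult[OF sK pc])
  moreover have "coeff (tmult H G) 0 \<noteq> 0" using H(2) G(2) by (simp add: coeff_tmult_0[OF pc])
  moreover have "teval (tmult H G) x = 0" using H(3) by (simp add: teval_tmult[OF pc])
  ultimately show ?thesis unfolding sroot_def by blast
qed

context
  assumes perf: "\<forall>a::'L. \<exists>y. y ^ CHAR('L) = a"
begin

lemma sroot_add: "sroot K x \<Longrightarrow> sroot K y \<Longrightarrow> sroot K (x + y)"
proof -
  assume "sroot K x" "sroot K y"
  then obtain H1 H2 where H1: "H1 \<in> twisted_over K" "coeff H1 0 \<noteq> 0" "teval H1 x = 0"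
    and H2: "H2 \<in> twisted_over K" "coeff H2 0 \<noteq> 0" "teval H2 y = 0"
    unfolding sroot_def by blast
  obtain A B where AB: "A \<in> twisted_over K" "B \<in> twisted_over K" "tmult A H1 = tmult B H2" "coeff A 0 \<noteq> 0"
    using lclm_sep[OF pc perf sK H1(1,2) H2(1,2)] by blast
  have "tmult A H1 \<in> twisted_over K" using AB(1) H1(1) by (rule tw_tmult[OF sK pc])
  moreover have "coeff (tmult A H1) 0 \<noteq> 0" using AB(4) H1(2) by (simp add: coeff_tmult_0[OF pc])
  moreover have "teval (tmult A H1) (x + y) = 0"
  proof -
    have "teval (tmult A H1) (x + y) = teval (tmult A H1) x + teval (tmult B H2) y"
      by (simp add: teval_addx[OF pc] AB(3))
    also have "\<dots> = 0" using H1(3) H2(3) by (simp add: teval_tmult[OF pc] teval_at0[OF pc])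
    finally show ?thesis .
  qed
  ultimately show ?thesis unfolding sroot_def by blast
qed

lemma sroot_diff: "sroot K x \<Longrightarrow> sroot K y \<Longrightarrow> sroot K (x - y)"
  using sroot_add[of x "-y"] sroot_minus[of y] by simp

lemma sroot_sum: "(\<And>i. i \<in> A \<Longrightarrow> sroot K (F i)) \<Longrightarrow> sroot K (sum F A)"
  by (induction A rule: infinite_finite_induct) (auto simp: sroot_0 sroot_add)

lemma commute_sroot:
  assumes aK: "a \<in> twisted_over K" and r: "degree a \<ge> 1" and comm: "tmult u a = tmult a u"
  shows "sroot K (coeff u k)"
proof -
  define r where "r = degree a"
  define P where "P = (\<lambda>i::nat. CHAR('L) ^ i)"
  define ar where "ar = lead_coeff a"
  have anz: "a \<noteq> 0" using r by auto
  have arnz: "ar \<noteq> 0" using anz by (simp add: ar_def)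
  have arK: "ar \<in> K" using aK by (simp add: ar_def tw_coeff[OF sK])
  have stepk: "sroot K (coeff u k)" if IH: "\<forall>i>k. sroot K (coeff u i)" for k
  proof -
    define m where "m = k + r"
    have eq: "(\<Sum>i\<le>m. coeff u i * coeff a (m - i) ^ P i) = (\<Sum>j\<le>m. coeff a j * coeff u (m - j) ^ P j)"
      using arg_cong[OF comm, of "\<lambda>f. coeff f m"] by (simp add: coeff_tmult[OF pc] P_def)
    have L: "(\<Sum>i\<le>m. coeff u i * coeff a (m - i) ^ P i) = coeff u k * ar ^ P k + (\<Sum>i\<in>{k<..m}. coeff u i * coeff a (m - i) ^ P i)"
    proof -
      have "(\<Sum>i\<le>m. coeff u i * coeff a (m - i) ^ P i) = coeff u k * coeff a (m - k) ^ P k + (\<Sum>i\<in>{..m} - {k}. coeff u i * coeff a (m - i) ^ P i)"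
        by (rule sum.remove) (auto simp: m_def)
      also have "(\<Sum>i\<in>{..m} - {k}. coeff u i * coeff a (m - i) ^ P i) = (\<Sum>i\<in>{k<..m}. coeff u i * coeff a (m - i) ^ P i)"
      proof (rule sum.mono_neutral_right)
        show "\<forall>i\<in>{..m} - {k} - {k<..m}. coeff u i * coeff a (m - i) ^ P i = 0"
        proof
          fix i assume "i \<in> {..m} - {k} - {k<..m}"
          then have "m - i > degree a" by (auto simp: m_def r_def)
          then show "coeff u i * coeff a (m - i) ^ P i = 0" by (simp add: coeff_eq_0 P_def frob_0[OF pc])
        qed
      qed auto
      finally show ?thesis by (simp add: m_def ar_def r_def)
    qed
    have R: "(\<Sum>j\<le>m. coeff a j * coeff u (m - j) ^ P j) = ar * coeff u k ^ P r + (\<Sum>j<r. coeff a j * coeff u (m - j) ^ P j)"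
    proof -
      have "(\<Sum>j\<le>m. coeff a j * coeff u (m - j) ^ P j) = coeff a r * coeff u (m - r) ^ P r + (\<Sum>j\<in>{..m} - {r}. coeff a j * coeff u (m - j) ^ P j)"
        by (rule sum.remove) (auto simp: m_def)
      also have "(\<Sum>j\<in>{..m} - {r}. coeff a j * coeff u (m - j) ^ P j) = (\<Sum>j<r. coeff a j * coeff u (m - j) ^ P j)"
      proof (rule sum.mono_neutral_right)
        show "\<forall>j\<in>{..m} - {r} - {..<r}. coeff a j * coeff u (m - j) ^ P j = 0"
          by (auto simp: coeff_eq_0 r_def)
      qed (auto simp: m_def)
      finally show ?thesis by (simp add: m_def ar_def r_def)
    qed
    define y where "y = (\<Sum>i\<in>{k<..m}. coeff u i * coeff a (m - i) ^ P i) - (\<Sum>j<r. coeff a j * coeff u (m - j) ^ P j)"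
    have ey: "ar * coeff u k ^ P r - ar ^ P k * coeff u k = y"
      using eq L R by (simp add: y_def algebra_simps)
    have sy: "sroot K y"
      unfolding y_def
    proof (intro sroot_diff sroot_sum)
      fix i assume "i \<in> {k<..m}"
      then have "sroot K (coeff u i)" using IH by auto
      moreover have "coeff a (m - i) ^ P i \<in> K" using aK by (intro sKpow[OF sK] tw_coeff[OF sK])
      ultimately have "sroot K (coeff a (m - i) ^ P i * coeff u i)" using sroot_scale by blast
      then show "sroot K (coeff u i * coeff a (m - i) ^ P i)" by (metis mult.commute)
    next
      fix j assume "j \<in> {..<r}"
      then have "m - j > k" by (auto simp: m_def)
      then have "sroot K (coeff u (m - j) ^ P j)" using IH unfolding P_def by (intro sroot_frobn) auto
      moreover have "coeff a j \<in> K" using aK by (rule tw_coeff[OF sK])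
      ultimately show "sroot K (coeff a j * coeff u (m - j) ^ P j)" using sroot_scale by simp
    qed
    define G where "G = monom ar r - [:ar ^ P k:]"
    have GK: "G \<in> twisted_over K" unfolding G_def
      using arK by (intro tw_diff[OF sK] tw_monom[OF sK] tw_const[OF sK] sKpow[OF sK])
    have G0: "coeff G 0 \<noteq> 0" using r arnz charpos[OF pc]
      by (simp add: G_def r_def coeff_monom P_def)
    have "teval G (coeff u k) = y"
      using ey by (simp add: G_def teval_diff teval_monom teval_const P_def)
    then show ?thesis using sroot_pre[OF GK G0] sy by simp
  qed
  have all: "\<forall>i\<ge>k. sroot K (coeff u i)" if "k \<le> Suc (degree u)" for k
    using that
  proof (induction k rule: inc_induct)
    case base
    show ?case by (auto simp: coeff_eq_0 sroot_0)
  next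
    case (step n)
    have "\<forall>i>n. sroot K (coeff u i)" using step.IH by auto
    then have "sroot K (coeff u n)" by (rule stepk)
    then show ?case using step.IH by (metis le_eq_less_or_eq Suc_le_eq)
  qed
  show ?thesis
  proof (cases "k \<le> Suc (degree u)")
    case True then show ?thesis using all by blast
  next
    case False then show ?thesis by (simp add: coeff_eq_0 sroot_0)
  qed
qed

end

end

lemma degree_diff_left: "degree q < degree p \<Longrightarrow> degree (p - q) = degree (p::'b::ab_group_add poly)"
  using degree_add_eq_left[of "-q" p] by simp

lemma coset_diff:
  fixes M :: "'b::ab_group_add set"
  assumes "0 \<in> M" "(\<lambda>m. x + m) ` M = (\<lambda>m. y + m) ` M"
  shows "x - y \<in> M"
proof -
  have "x \<in> (\<lambda>m. y + m) ` M" using assms by (metis add.right_neutral image_eqI)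
  then obtain m where "m \<in> M" "x = y + m" by blast
  then show ?thesis by simp
qed

context
  fixes K :: "'L::field set" and \<phi> :: "'a::idom \<Rightarrow> 'L poly" and p :: nat
  assumes adm: "admissible_coeff_ring TYPE('a) p" and ch: "CHAR('L) = p"
    and ac: "alg_closed TYPE('L)" and fg: "fin_gen_field K" and dm: "drinfeld_module K \<phi>"
begin

lemma pc: "prime CHAR('L)" using adm ch by (simp add: admissible_coeff_ring_def)

lemma perf: "\<forall>a::'L. \<exists>y. y ^ CHAR('L) = a"
proof
  fix a :: 'L
  define f where "f = monom 1 (CHAR('L)) + [:-a:]"
  have "degree f = CHAR('L)" unfolding f_def
    by (subst degree_add_eq_left) (auto simp: degree_monom_eq charpos[OF pc])
  then have "degree f > 0" using charpos[OF pc] by simp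
  then obtain y where "poly f y = 0" using ac unfolding alg_closed_def by blast
  then have "y ^ CHAR('L) = a" by (simp add: f_def poly_monom)
  then show "\<exists>y. y ^ CHAR('L) = a" by blast
qed

lemma sK: "sfield K"
  using fg sfield_field_gen unfolding fin_gen_field_def by blast

lemma phiK: "\<phi> a \<in> twisted_over K" using dm by (simp add: drinfeld_module_def)
lemma phi_add: "\<phi> (a + b) = \<phi> a + \<phi> b" using dm by (simp add: drinfeld_module_def)
lemma phi_mult: "\<phi> (a * b) = tmult (\<phi> a) (\<phi> b)" using dm by (simp add: drinfeld_module_def)
lemma phi_1: "\<phi> 1 = 1" using dm by (simp add: drinfeld_module_def)
lemma phi_0: "\<phi> 0 = 0" using phi_add[of 0 0] by (metis add_cancel_right_right add.right_neutral)
lemma phi_minus: "\<phi> (- a) = - \<phi> a" using phi_add[of a "-a"] phi_0 by (metis add.right_inverse add.inverse_unique)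
lemma phi_comm: "tmult (\<phi> a) (\<phi> b) = tmult (\<phi> b) (\<phi> a)"
  by (metis phi_mult mult.commute)

lemma ex_b: "\<exists>b. degree (\<phi> b) \<ge> 1"
  using dm unfolding drinfeld_module_def by (metis Suc_leI One_nat_def)

lemma E_iff: "u \<in> End_sep K \<phi> \<longleftrightarrow> (\<forall>a. tmult u (\<phi> a) = tmult (\<phi> a) u)"
proof
  assume "\<forall>a. tmult u (\<phi> a) = tmult (\<phi> a) u"
  moreover obtain b where b: "degree (\<phi> b) \<ge> 1" using ex_b by blast
  ultimately have "sroot K (coeff u i)" for i
    using commute_sroot[OF sK pc perf phiK b] by blast
  then have "u \<in> twisted_over (sep_closure K)"
    by (auto simp: twisted_over_def sroot_sep[OF sK pc])
  then show "u \<in> End_sep K \<phi>" using \<open>\<forall>a. _\<close> by (simp add: End_sep_def)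
qed (simp add: End_sep_def)

lemma E_0: "0 \<in> End_sep K \<phi>"
  by (simp add: E_iff tmult_0_left[OF pc] tmult_0_right[OF pc])

lemma E_add: "u \<in> End_sep K \<phi> \<Longrightarrow> v \<in> End_sep K \<phi> \<Longrightarrow> u + v \<in> End_sep K \<phi>"
  by (simp add: E_iff tmult_add_left[OF pc] tmult_add_right[OF pc])

lemma E_minus: "u \<in> End_sep K \<phi> \<Longrightarrow> - u \<in> End_sep K \<phi>"
  by (simp add: E_iff tmult_minus_left[OF pc] tmult_minus_right[OF pc])

lemma E_diff: "u \<in> End_sep K \<phi> \<Longrightarrow> v \<in> End_sep K \<phi> \<Longrightarrow> u - v \<in> End_sep K \<phi>"
  by (simp add: E_iff tmult_diff_left[OF pc] tmult_diff_right[OF pc])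

lemma E_phi_mult: "u \<in> End_sep K \<phi> \<Longrightarrow> tmult (\<phi> c) u \<in> End_sep K \<phi>"
  unfolding E_iff by (metis tmult_assoc[OF pc] phi_comm)

lemma E_phi: "\<phi> c \<in> End_sep K \<phi>"
  unfolding E_iff by (metis phi_comm)

lemma E_sum: "(\<And>i. i \<in> A \<Longrightarrow> F i \<in> End_sep K \<phi>) \<Longrightarrow> sum F A \<in> End_sep K \<phi>"
  by (induction A rule: infinite_finite_induct) (auto simp: E_0 E_add)

lemma M_sub_E: "m \<in> M_deg K \<phi> t d \<Longrightarrow> m \<in> End_sep K \<phi>"
  unfolding M_deg_def
  by (induction rule: Fpt_span.induct) (auto simp: E_0 E_add E_phi_mult)

lemma M_0: "0 \<in> M_deg K \<phi> t d"
  unfolding M_deg_def by (rule sp_zero)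

lemma M_add: "u \<in> M_deg K \<phi> t d \<Longrightarrow> v \<in> M_deg K \<phi> t d \<Longrightarrow> u + v \<in> M_deg K \<phi> t d"
  unfolding M_deg_def by (rule sp_add)

lemma M_smult: "a \<in> ring_gen {t} \<Longrightarrow> u \<in> M_deg K \<phi> t d \<Longrightarrow> tmult (\<phi> a) u \<in> M_deg K \<phi> t d"
  unfolding M_deg_def by (rule sp_smult)

lemma M_base: "u \<in> End_sep K \<phi> \<Longrightarrow> int (degree u) \<le> d \<Longrightarrow> u \<in> M_deg K \<phi> t d"
  unfolding M_deg_def by (rule sp_base) simp

lemma tpow_gen: "t ^ j \<in> ring_gen {t}"
  by (induction j) (auto intro: ring_gen.intros)




context
  fixes t :: 'a and d :: int
  assumes fin: "finite_index (M_deg K \<phi> t d) (End_sep K \<phi>)"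
begin



abbreviation "M \<equiv> M_deg K \<phi> t d"
abbreviation "E \<equiv> End_sep K \<phi>"

lemma infinite_cosets:
  fixes g :: "nat \<Rightarrow> 'L poly"
  assumes "inj g" "\<And>j. g j \<in> E"
    and "\<And>i j. i < j \<Longrightarrow> g j - g i \<notin> M"
  shows False
proof -
  define C where "C = (\<lambda>x. (\<lambda>m. x + m) ` M)"
  have "inj (\<lambda>j. C (g j))"
  proof (rule injI)
    fix i j assume eq: "C (g i) = C (g j)"
    show "i = j"
    proof (rule ccontr)
      assume "i \<noteq> j"
      then consider "i < j" | "j < i" by linarith
      then show False
      proof cases
        case 1
        have "g j - g i \<in> M" using coset_diff[OF M_0] eq by (simp add: C_def)
        then show False using assms(3)[OF 1] by blast
      next
        case 2
        have "g i - g j \<in> M" using coset_diff[OF M_0] eq by (simp add: C_def)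
        then show False using assms(3)[OF 2] by blast
      qed
    qed
  qed
  moreover have "range (\<lambda>j. C (g j)) \<subseteq> C ` E" using assms(2) by auto
  moreover have "finite (C ` E)" using fin by (simp add: finite_index_def C_def)
  ultimately have "finite (UNIV :: nat set)"
    by (metis finite_imageD finite_subset)
  then show False by simp
qed

lemma deg0_false:
  assumes r0: "degree (\<phi> t) = 0"
  shows False
proof -
  have gen0: "a \<in> ring_gen {t} \<Longrightarrow> degree (\<phi> a) = 0" for a
  proof (induction rule: ring_gen.induct)
    case (rg_add x y) then show ?case using degree_add_le_max[of "\<phi> x" "\<phi> y"] by (simp add: phi_add)
  next
    case (rg_mult x y) then show ?case using degree_tmult_le[OF pc, of "\<phi> x" "\<phi> y"] by (simp add: phi_mult)
  qed (auto simp: r0 phi_0 phi_1 phi_minus)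
  define D0 where "D0 = nat (max d 0)"
  have Mdeg: "m \<in> M \<Longrightarrow> degree m \<le> D0" for m
    unfolding M_deg_def
  proof (induction rule: Fpt_span.induct)
    case (sp_add u v) then show ?case using degree_add_le_max[of u v] by simp
  next
    case (sp_smult a u) then show ?case using degree_tmult_le[OF pc, of "\<phi> a" u] gen0 by simp
  qed (auto simp: D0_def)
  obtain b where b: "degree (\<phi> b) \<ge> 1" using ex_b by blast
  define s where "s = degree (\<phi> b)"
  have pw: "\<phi> (b ^ n) \<noteq> 0 \<and> degree (\<phi> (b ^ n)) = n * s" for n
  proof (induction n)
    case 0 then show ?case by (simp add: phi_1)
  next
    case (Suc n)
    have bnz: "\<phi> b \<noteq> 0" using b by auto
    have "\<phi> (b ^ Suc n) = tmult (\<phi> b) (\<phi> (b ^ n))" by (simp add: phi_mult)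
    then show ?case using Suc bnz
      by (simp add: tmult_eq_0_iff[OF pc] degree_tmult[OF pc] s_def)
  qed
  define g where "g = (\<lambda>j. \<phi> (b ^ (Suc D0 + j)))"
  have dg: "degree (g j) = (Suc D0 + j) * s" for j using pw[of "Suc D0 + j"] by (simp only: g_def)
  have s1: "s \<ge> 1" using b by (simp add: s_def)
  have mono: "i < j \<Longrightarrow> degree (g i) < degree (g j)" for i j
    using s1 by (simp add: dg)
  show False
  proof (rule infinite_cosets[of g])
    show "inj g" by (rule injI) (metis mono less_irrefl linorder_neqE_nat)
    show "g j \<in> E" for j by (simp add: g_def E_phi)
    fix i j :: nat assume "i < j"
    then have "degree (g j - g i) = degree (g j)" using mono by (simp add: degree_diff_left)
    also have "\<dots> > D0" using s1 dg[of j] by (metis le_add1 less_eq_Suc_le mult_le_mono2 nat_mult_1_right order_trans Suc_le_eq add_Suc)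
    finally show "g j - g i \<notin> M" using Mdeg by fastforce
  qed
qed

context
  assumes r1: "degree (\<phi> t) \<ge> 1"
begin



abbreviation "MM \<equiv> M_deg K \<phi> t d"
abbreviation "EE \<equiv> End_sep K \<phi>"
abbreviation "P j \<equiv> \<phi> (t ^ j)"
abbreviation "good v \<equiv> v \<in> EE \<and> (v = 0 \<or> int (degree v) \<le> d)"
abbreviation "Sw w J \<equiv> (\<Sum>j<J. tmult (P j) (w j))"

lemma P_add: "P (i + j) = tmult (P i) (P j)" by (simp add: power_add phi_mult)

lemma P_nz_deg: "P j \<noteq> 0 \<and> degree (P j) = j * degree (\<phi> t)"
proof (induction j)
  case 0 then show ?case by (simp add: phi_1)
next
  case (Suc j)
  have tnz: "\<phi> t \<noteq> 0" using r1 by auto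
  have "P (Suc j) = tmult (\<phi> t) (P j)" by (simp add: phi_mult)
  then show ?case using Suc tnz by (simp add: tmult_eq_0_iff[OF pc] degree_tmult[OF pc])
qed

lemma P_nz: "P j \<noteq> 0" and deg_P: "degree (P j) = j * degree (\<phi> t)"
  using P_nz_deg by auto

lemma deg_Pv: "v \<noteq> 0 \<Longrightarrow> degree (tmult (P j) v) = j * degree (\<phi> t) + degree v"
  by (simp add: degree_tmult[OF pc P_nz] deg_P)

lemma lc_Pv: "v \<noteq> 0 \<Longrightarrow> lead_coeff (tmult (P j) v) = lead_coeff (P j) * lead_coeff v ^ (CHAR('L) ^ (j * degree (\<phi> t)))"
  by (simp add: lead_coeff_tmult[OF pc P_nz] deg_P)

lemma Pv_nz: "v \<noteq> 0 \<Longrightarrow> tmult (P j) v \<noteq> 0"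
  by (simp add: tmult_eq_0_iff[OF pc] P_nz)

lemma good_add: "good u \<Longrightarrow> good v \<Longrightarrow> good (u + v)"
proof -
  assume gu: "good u" and gv: "good v"
  have "u + v \<in> EE" using gu gv by (simp add: E_add)
  moreover have "u + v = 0 \<or> int (degree (u + v)) \<le> d"
  proof (cases "u = 0 \<or> v = 0")
    case True then show ?thesis using gu gv by auto
  next
    case False
    then have "int (degree u) \<le> d" "int (degree v) \<le> d" using gu gv by auto
    then show ?thesis using degree_add_le_max[of u v] by linarith
  qed
  ultimately show ?thesis by blast
qed

lemma good_minus: "good u \<Longrightarrow> good (- u)"
  by (auto simp: E_minus)

lemma good_0: "good 0" by (simp add: E_0)

lemma Sw_ext: "(\<forall>j\<ge>J. w j = 0) \<Longrightarrow> J \<le> J' \<Longrightarrow> Sw w J' = Sw w J"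
  by (rule sum.mono_neutral_right) (auto simp: tmult_0_right[OF pc])

definition RepP :: "'L poly \<Rightarrow> bool" where
  "RepP m \<longleftrightarrow> (\<exists>w J. (\<forall>j. good (w j)) \<and> (\<forall>j\<ge>J. w j = 0) \<and> m = Sw w J)"

lemma RepP_0: "RepP 0"
  unfolding RepP_def by (intro exI[of _ "\<lambda>j. 0"] exI[of _ 0]) (simp add: good_0)

lemma RepP_base: "good v \<Longrightarrow> RepP v"
  unfolding RepP_def
  by (intro exI[of _ "\<lambda>j. if j = 0 then v else 0"] exI[of _ 1]) (auto simp: good_0 phi_1 tmult_1_left[OF pc])

lemma RepP_add: "RepP u \<Longrightarrow> RepP v \<Longrightarrow> RepP (u + v)"
proof -
  assume "RepP u" "RepP v"
  then obtain w1 J1 w2 J2 where w1: "\<forall>j. good (w1 j)" "\<forall>j\<ge>J1. w1 j = 0" "u = Sw w1 J1"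
    and w2: "\<forall>j. good (w2 j)" "\<forall>j\<ge>J2. w2 j = 0" "v = Sw w2 J2"
    unfolding RepP_def by blast
  define J where "J = max J1 J2"
  have "u = Sw w1 J" using Sw_ext[OF w1(2), of J] w1(3) by (simp add: J_def)
  moreover have "v = Sw w2 J" using Sw_ext[OF w2(2), of J] w2(3) by (simp add: J_def)
  ultimately have "u + v = Sw (\<lambda>j. w1 j + w2 j) J"
    by (simp add: tmult_add_right[OF pc] sum.distrib)
  moreover have "\<forall>j. good (w1 j + w2 j)" using w1(1) w2(1) good_add by blast
  moreover have "\<forall>j\<ge>J. w1 j + w2 j = 0" using w1(2) w2(2) by (simp add: J_def)
  ultimately show ?thesis unfolding RepP_def by (intro exI[of _ "\<lambda>j. w1 j + w2 j"] exI[of _ J]) auto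
qed

lemma RepP_minus: "RepP u \<Longrightarrow> RepP (- u)"
proof -
  assume "RepP u"
  then obtain w J where w: "\<forall>j. good (w j)" "\<forall>j\<ge>J. w j = 0" "u = Sw w J"
    unfolding RepP_def by blast
  have "- u = Sw (\<lambda>j. - w j) J" using w(3) by (simp add: tmult_minus_right[OF pc] sum_negf)
  then show ?thesis unfolding RepP_def using w(1,2) good_minus
    by (intro exI[of _ "\<lambda>j. - w j"] exI[of _ J]) auto
qed

lemma RepP_t: "RepP u \<Longrightarrow> RepP (tmult (\<phi> t) u)"
proof -
  assume "RepP u"
  then obtain w J where w: "\<forall>j. good (w j)" "\<forall>j\<ge>J. w j = 0" "u = Sw w J"
    unfolding RepP_def by blast
  define w' where "w' = (\<lambda>j. case j of 0 \<Rightarrow> 0 | Suc i \<Rightarrow> w i)"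
  have "tmult (\<phi> t) u = (\<Sum>j<J. tmult (P (Suc j)) (w j))"
    using w(3) by (simp add: tmult_sum_right[OF pc] tmult_assoc[OF pc, symmetric] phi_mult)
  also have "\<dots> = Sw w' (Suc J)"
    by (subst sum.lessThan_Suc_shift) (simp add: w'_def tmult_0_right[OF pc])
  finally have "tmult (\<phi> t) u = Sw w' (Suc J)" .
  moreover have "\<forall>j. good (w' j)" using w(1) good_0 by (auto simp: w'_def split: nat.split)
  moreover have "\<forall>j\<ge>Suc J. w' j = 0" using w(2) by (auto simp: w'_def split: nat.split)
  ultimately show ?thesis unfolding RepP_def by blast
qed

lemma RepP_smult: "a \<in> ring_gen {t} \<Longrightarrow> \<forall>u. RepP u \<longrightarrow> RepP (tmult (\<phi> a) u)"
proof (induction rule: ring_gen.induct)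
  case (rg_base x) then show ?case using RepP_t by auto
next
  case rg_zero then show ?case by (simp add: phi_0 tmult_0_left[OF pc] RepP_0)
next
  case rg_one then show ?case by (simp add: phi_1 tmult_1_left[OF pc])
next
  case (rg_add x y) then show ?case by (simp add: phi_add tmult_add_left[OF pc] RepP_add)
next
  case (rg_uminus x) then show ?case by (simp add: phi_minus tmult_minus_left[OF pc] RepP_minus)
next
  case (rg_mult x y) then show ?case by (simp add: phi_mult tmult_assoc[OF pc])
qed

lemma M_RepP: "m \<in> MM \<Longrightarrow> RepP m"
  unfolding M_deg_def
proof (induction rule: Fpt_span.induct)
  case sp_zero then show ?case by (rule RepP_0)
next
  case (sp_base u) then show ?case by (intro RepP_base) auto
next
  case (sp_add u v) then show ?case using sp_add.IH by (intro RepP_add)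
next
  case (sp_smult a u) then show ?case using RepP_smult by blast
qed

lemma height:
  "\<forall>w J. (\<forall>j. good (w j)) \<and> (\<forall>j\<ge>J. w j = 0) \<and> (\<forall>j. w j \<noteq> 0 \<longrightarrow> j * degree (\<phi> t) + degree (w j) < h) \<and> Sw w J \<noteq> 0 \<longrightarrow>
     (\<exists>j v. v \<in> EE \<and> v \<noteq> 0 \<and> int (degree v) \<le> d \<and> degree (tmult (P j) v) = degree (Sw w J) \<and>
        lead_coeff (tmult (P j) v) = lead_coeff (Sw w J))"
proof (induction h)
  case 0
  show ?case
  proof (intro allI impI)
    fix w J assume H: "(\<forall>j. good (w j)) \<and> (\<forall>j\<ge>J. w j = 0) \<and> (\<forall>j. w j \<noteq> 0 \<longrightarrow> j * degree (\<phi> t) + degree (w j) < 0) \<and> Sw w J \<noteq> 0"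
    then have "\<forall>j. w j = 0" by auto
    then have "Sw w J = 0" by (simp add: tmult_0_right[OF pc])
    with H show "\<exists>j v. v \<in> EE \<and> v \<noteq> 0 \<and> int (degree v) \<le> d \<and> degree (tmult (P j) v) = degree (Sw w J) \<and>
        lead_coeff (tmult (P j) v) = lead_coeff (Sw w J)" by simp
  qed
next
  case (Suc h)
  show ?case
  proof (intro allI impI)
    fix w J assume H: "(\<forall>j. good (w j)) \<and> (\<forall>j\<ge>J. w j = 0) \<and> (\<forall>j. w j \<noteq> 0 \<longrightarrow> j * degree (\<phi> t) + degree (w j) < Suc h) \<and> Sw w J \<noteq> 0"
    then have gw: "\<And>j. good (w j)" and wJ: "\<And>j. j \<ge> J \<Longrightarrow> w j = 0"
      and bd: "\<And>j. w j \<noteq> 0 \<Longrightarrow> j * degree (\<phi> t) + degree (w j) < Suc h" and Snz: "Sw w J \<noteq> 0" by auto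
    define R where "R = degree (\<phi> t)"
    define T where "T = {j \<in> {..<J}. w j \<noteq> 0 \<and> j * R + degree (w j) = h}"
    have TJ: "T \<subseteq> {..<J}" and finT: "finite T" by (auto simp: T_def)
    have lowbd: "j * R + degree (w j) < h" if "w j \<noteq> 0" "j \<notin> T" for j
    proof -
      have "j < J" using that wJ by (meson not_le)
      then show ?thesis using that bd[of j] by (auto simp: T_def R_def)
    qed
    show "\<exists>j v. v \<in> EE \<and> v \<noteq> 0 \<and> int (degree v) \<le> d \<and> degree (tmult (P j) v) = degree (Sw w J) \<and>
        lead_coeff (tmult (P j) v) = lead_coeff (Sw w J)"
    proof (cases "T = {}")
      case True
      then have "\<forall>j. w j \<noteq> 0 \<longrightarrow> j * degree (\<phi> t) + degree (w j) < h" using lowbd by (auto simp: R_def)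
      then have conj: "(\<forall>j. good (w j)) \<and> (\<forall>j\<ge>J. w j = 0) \<and> (\<forall>j. w j \<noteq> 0 \<longrightarrow> j * degree (\<phi> t) + degree (w j) < h) \<and> Sw w J \<noteq> 0"
        using gw wJ Snz by blast
      from mp[OF spec[OF spec[OF Suc.IH, of w], of J] conj] show ?thesis .
    next
      case False
      define j0 where "j0 = Min T"
      have j0T: "j0 \<in> T" using False finT by (simp add: j0_def)
      have j0le: "j \<in> T \<Longrightarrow> j0 \<le> j" for j using finT by (simp add: j0_def)
      have wj0: "w j0 \<noteq> 0" "j0 * R + degree (w j0) = h" "j0 < J" using j0T by (auto simp: T_def)
      define w' where "w' = (\<Sum>j\<in>T. tmult (P (j - j0)) (w j))"
      define rs where "rs = (\<Sum>j\<in>{..<J} - T. tmult (P j) (w j))"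
      have Tpart: "(\<Sum>j\<in>T. tmult (P j) (w j)) = tmult (P j0) w'"
      proof -
        have "(\<Sum>j\<in>T. tmult (P j) (w j)) = (\<Sum>j\<in>T. tmult (P j0) (tmult (P (j - j0)) (w j)))"
        proof (rule sum.cong[OF refl])
          fix j assume "j \<in> T"
          then have "j = j0 + (j - j0)" using j0le by auto
          then have "P j = tmult (P j0) (P (j - j0))" by (metis P_add)
          then show "tmult (P j) (w j) = tmult (P j0) (tmult (P (j - j0)) (w j))" by (simp add: tmult_assoc[OF pc])
        qed
        then show ?thesis by (simp add: w'_def tmult_sum_right[OF pc])
      qed
      have split: "Sw w J = rs + tmult (P j0) w'"
        using sum.subset_diff[OF TJ, of "\<lambda>j. tmult (P j) (w j)"] Tpart by (simp add: rs_def)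
      have rs_hi: "coeff rs n = 0" if "n \<ge> h" for n
        unfolding rs_def coeff_sum
      proof (rule sum.neutral, rule ballI)
        fix j assume j: "j \<in> {..<J} - T"
        show "coeff (tmult (P j) (w j)) n = 0"
        proof (cases "w j = 0")
          case True then show ?thesis by (simp add: tmult_0_right[OF pc])
        next
          case False
          then have "degree (tmult (P j) (w j)) < h" using lowbd[of j] j deg_Pv by (simp add: R_def)
          then show ?thesis using that by (intro coeff_eq_0) simp
        qed
      qed
      have w'hi: "coeff w' n = 0" if "n > degree (w j0)" for n
        unfolding w'_def coeff_sum
      proof (rule sum.neutral, rule ballI)
        fix j assume j: "j \<in> T"
        then have wj: "w j \<noteq> 0" "j * R + degree (w j) = h" by (auto simp: T_def)
        have "j0 * R \<le> j * R" using j0le[OF j] by simp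
        then have "(j - j0) * R + degree (w j) = degree (w j0)"
          using wj(2) wj0(2) by (simp add: diff_mult_distrib)
        then have "degree (tmult (P (j - j0)) (w j)) = degree (w j0)" using deg_Pv[OF wj(1)] by (simp add: R_def)
        then show "coeff (tmult (P (j - j0)) (w j)) n = 0" using that by (intro coeff_eq_0) simp
      qed
      have dw': "degree w' \<le> degree (w j0)" by (rule degree_le) (use w'hi in auto)
      have w'E: "w' \<in> EE" unfolding w'_def using gw by (intro E_sum E_phi_mult) auto
      have gw': "good w'"
      proof -
        have "int (degree (w j0)) \<le> d" using gw[of j0] wj0(1) by auto
        then show ?thesis using w'E dw' by auto
      qed
      show ?thesis
      proof (cases "w' \<noteq> 0 \<and> degree w' = degree (w j0)")
        case True
        define X where "X = tmult (P j0) w'"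
        have dX: "degree X = h" using True wj0(2) deg_Pv[of w' j0] by (simp add: X_def R_def)
        have Xnz: "X \<noteq> 0" using True Pv_nz by (simp add: X_def)
        have cS: "coeff (Sw w J) n = coeff X n + coeff rs n" for n by (simp add: split X_def)
        have "coeff (Sw w J) h = lead_coeff X" using cS[of h] rs_hi[of h] dX by simp
        moreover have "coeff (Sw w J) n = 0" if "n > h" for n
          using cS[of n] rs_hi[of n] that dX by (simp add: coeff_eq_0)
        ultimately have c1: "coeff (Sw w J) h = lead_coeff X" and c2: "\<forall>n>h. coeff (Sw w J) n = 0" by auto
        have "degree (Sw w J) \<le> h" by (rule degree_le[OF c2])
        moreover have "coeff (Sw w J) h \<noteq> 0" using c1 Xnz by simp
        then have "h \<le> degree (Sw w J)" by (rule le_degree)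
        ultimately have dS: "degree (Sw w J) = h" by simp
        then have "lead_coeff (Sw w J) = lead_coeff X" using c1 by simp
        note dS this
        then show ?thesis using True w'E gw' dX wj0(1) gw[of j0] dw'
          by (intro exI[of _ j0] exI[of _ w']) (auto simp: X_def)
      next
        case False
        then have w'small: "w' = 0 \<or> degree w' < degree (w j0)" using dw' by auto
        define w'' where "w'' = (\<lambda>j. if j = j0 then w' else if j \<in> T then 0 else w j)"
        have "Sw w'' J = (\<Sum>j\<in>{..<J} - T. tmult (P j) (w'' j)) + (\<Sum>j\<in>T. tmult (P j) (w'' j))"
          by (rule sum.subset_diff[OF TJ]) simp
        also have "(\<Sum>j\<in>{..<J} - T. tmult (P j) (w'' j)) = rs"
          unfolding rs_def by (rule sum.cong[OF refl]) (use j0T in \<open>auto simp: w''_def\<close>)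
        also have "(\<Sum>j\<in>T. tmult (P j) (w'' j)) = (\<Sum>j\<in>T. if j = j0 then tmult (P j0) w' else 0)"
          by (rule sum.cong[OF refl]) (auto simp: w''_def tmult_0_right[OF pc])
        also have "\<dots> = tmult (P j0) w'" using finT j0T by simp
        finally have eqS: "Sw w'' J = Sw w J" using split by simp
        have g'': "\<forall>j. good (w'' j)" using gw gw' good_0 by (auto simp: w''_def)
        have J'': "\<forall>j\<ge>J. w'' j = 0" using wJ wj0(3) TJ by (auto simp: w''_def)
        have b'': "\<forall>j. w'' j \<noteq> 0 \<longrightarrow> j * degree (\<phi> t) + degree (w'' j) < h"
        proof (intro allI impI)
          fix j assume nz: "w'' j \<noteq> 0"
          show "j * degree (\<phi> t) + degree (w'' j) < h"
          proof (cases "j = j0")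
            case True
            then have "w' \<noteq> 0" using nz by (simp add: w''_def)
            then have "degree w' < degree (w j0)" using w'small by simp
            then show ?thesis using True wj0(2) by (simp add: w''_def R_def)
          next
            case False
            then have "j \<notin> T" "w'' j = w j" using nz by (auto simp: w''_def split: if_splits)
            then show ?thesis using lowbd[of j] nz by (simp add: R_def)
          qed
        qed
        have "Sw w'' J \<noteq> 0" using eqS Snz by simp
        then have conj: "(\<forall>j. good (w'' j)) \<and> (\<forall>j\<ge>J. w'' j = 0) \<and> (\<forall>j. w'' j \<noteq> 0 \<longrightarrow> j * degree (\<phi> t) + degree (w'' j) < h) \<and> Sw w'' J \<noteq> 0"
          using g'' J'' b'' by blast
        from mp[OF spec[OF spec[OF Suc.IH, of w''], of J] conj] show ?thesis unfolding eqS .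
      qed
    qed
  qed
qed

lemma R_main:
  assumes "m \<in> MM" "m \<noteq> 0"
  shows "\<exists>j v. v \<in> EE \<and> v \<noteq> 0 \<and> int (degree v) \<le> d \<and> degree (tmult (P j) v) = degree m \<and>
        lead_coeff (tmult (P j) v) = lead_coeff m"
proof -
  obtain w J where w: "\<forall>j. good (w j)" "\<forall>j\<ge>J. w j = 0" "m = Sw w J"
    using M_RepP[OF assms(1)] unfolding RepP_def by blast
  define h where "h = (\<Sum>j<J. Suc (j * degree (\<phi> t) + degree (w j)))"
  have "\<forall>j. w j \<noteq> 0 \<longrightarrow> j * degree (\<phi> t) + degree (w j) < h"
  proof (intro allI impI)
    fix j assume "w j \<noteq> 0"
    then have "j < J" using w(2) by (meson not_le)
    then have "Suc (j * degree (\<phi> t) + degree (w j)) \<le> h"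
      unfolding h_def by (intro member_le_sum) auto
    then show "j * degree (\<phi> t) + degree (w j) < h" by simp
  qed
  then have conj: "(\<forall>j. good (w j)) \<and> (\<forall>j\<ge>J. w j = 0) \<and> (\<forall>j. w j \<noteq> 0 \<longrightarrow> j * degree (\<phi> t) + degree (w j) < h) \<and> Sw w J \<noteq> 0"
    using w assms(2) by blast
  from mp[OF spec[OF spec[OF height[of h], of w], of J] conj] show ?thesis unfolding w(3)[symmetric] .
qed

lemma tpow_gen': "t ^ j \<in> ring_gen {t}"
  by (induction j) (auto intro: ring_gen.intros)

lemma E_sub_M: "u \<in> EE \<Longrightarrow> u \<in> MM"
proof (induction "degree u" arbitrary: u rule: less_induct)
  case less
  define R where "R = degree (\<phi> t)"
  have R1: "R \<ge> 1" using r1 by (simp add: R_def)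
  show ?case
  proof (cases "u = 0 \<or> int (degree u) \<le> d")
    case True then show ?thesis using M_0 M_base less.prems by auto
  next
    case False
    then have unz: "u \<noteq> 0" and dd: "d < int (degree u)" by auto
    show ?thesis
    proof (cases "\<exists>j v. v \<in> EE \<and> v \<noteq> 0 \<and> int (degree v) \<le> d \<and> degree (tmult (P j) v) = degree u \<and> lead_coeff (tmult (P j) v) = lead_coeff u")
      case True
      then obtain j v where v: "v \<in> EE" "v \<noteq> 0" "int (degree v) \<le> d" "degree (tmult (P j) v) = degree u"
        "lead_coeff (tmult (P j) v) = lead_coeff u" by blast
      define X where "X = tmult (P j) v"
      have XM: "X \<in> MM" unfolding X_def by (rule M_smult[OF tpow_gen' M_base[OF v(1,3)]])
      have u'E: "u - X \<in> EE" unfolding X_def using less.prems v(1) by (intro E_diff E_phi_mult)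
      have c0: "coeff (u - X) (degree u) = 0" using v(4,5) by (simp add: X_def)
      have dle: "degree (u - X) \<le> degree u" using v(4) degree_diff_le[of u "degree u" X] by (simp add: X_def)
      show ?thesis
      proof (cases "u - X = 0")
        case True
        then have "u = X" by simp
        then show ?thesis using XM by simp
      next
        case False
        then have "degree (u - X) \<noteq> degree u" using c0 by (metis leading_coeff_0_iff)
        then have "degree (u - X) < degree u" using dle by simp
        then have "u - X \<in> MM" using less.hyps u'E by blast
        then have "(u - X) + X \<in> MM" using XM by (rule M_add)
        then show ?thesis by simp
      qed
    next
      case False
      note nred = False
      define g where "g = (\<lambda>j. tmult (P j) u)"
      have dg: "degree (g j) = j * R + degree u" for j using deg_Pv[OF unz] by (simp add: g_def R_def)
      have mono: "i < j \<Longrightarrow> degree (g i) < degree (g j)" for i j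
        using R1 by (simp add: dg)
      have lcg: "lead_coeff (g j) = lead_coeff (P j) * lead_coeff u ^ (CHAR('L) ^ (j * R))" for j
        using lc_Pv[OF unz] by (simp add: g_def R_def)
      show ?thesis
      proof (rule FalseE, rule infinite_cosets[of g])
        show "inj g" by (rule injI) (metis mono less_irrefl linorder_neqE_nat)
        show "g j \<in> EE" for j unfolding g_def using less.prems by (rule E_phi_mult)
        fix i j :: nat assume ij: "i < j"
        show "g j - g i \<notin> MM"
        proof
          assume mM: "g j - g i \<in> MM"
          have dm': "degree (g j - g i) = degree (g j)" using mono[OF ij] by (simp add: degree_diff_left)
          have mnz: "g j - g i \<noteq> 0" using mono[OF ij] by auto
          have lm: "lead_coeff (g j - g i) = lead_coeff (g j)"
            using dm' mono[OF ij] by (simp add: coeff_eq_0)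
          obtain j' v where v: "v \<in> EE" "v \<noteq> 0" "int (degree v) \<le> d"
            "degree (tmult (P j') v) = degree (g j - g i)" "lead_coeff (tmult (P j') v) = lead_coeff (g j - g i)"
            using R_main[OF mM mnz] by blast
          have deq: "j' * R + degree v = j * R + degree u"
            using v(4) dm' deg_Pv[OF v(2)] dg by (simp add: R_def)
          show False
          proof (cases "j \<le> j'")
            case True
            define v' where "v' = tmult (P (j' - j)) v"
            have v'nz: "v' \<noteq> 0" using Pv_nz[OF v(2)] by (simp add: v'_def)
            have "j' = j + (j' - j)" using True by simp
            then have PP: "tmult (P j') v = tmult (P j) v'"
              by (metis P_add tmult_assoc[OF pc] v'_def)
            have "(j' - j) * R + degree v = degree u"
              using deq True by (simp add: diff_mult_distrib)
            then have dv': "degree v' = degree u" using deg_Pv[OF v(2)] by (simp add: v'_def R_def)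
            have "lead_coeff (P j) * lead_coeff v' ^ (CHAR('L) ^ (j * R)) = lead_coeff (P j) * lead_coeff u ^ (CHAR('L) ^ (j * R))"
              using v(5) lm PP lc_Pv[OF v'nz, of j] lcg[of j] by (simp add: R_def)
            then have "lead_coeff v' ^ (CHAR('L) ^ (j * R)) = lead_coeff u ^ (CHAR('L) ^ (j * R))"
              using P_nz[of j] by simp
            then have "lead_coeff v' = lead_coeff u" by (rule frob_inj[OF pc])
            then have "degree (tmult (P (j' - j)) v) = degree u \<and> lead_coeff (tmult (P (j' - j)) v) = lead_coeff u"
              using dv' by (simp add: v'_def)
            then show False using nred v(1,2,3) by blast
          next
            case False
            then have "j' * R + R \<le> j * R" by (metis Suc_leI not_le mult_Suc mult_le_mono1 add.commute)
            then have "degree v \<ge> R + degree u" using deq by linarith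
            then have "degree v > degree u" using R1 by linarith
            then show False using v(3) dd by linarith
          qed
        qed
      qed
    qed
  qed
qed

lemma main_eq: "MM = EE"
  using E_sub_M M_sub_E by blast

end

end

end

theorem proposition5p10:
  fixes K :: "'L::field set" and \<phi> :: "'a::idom \<Rightarrow> 'L poly" and t :: 'a and d :: int and p :: nat
  assumes "admissible_coeff_ring TYPE('a) p"
    and "CHAR('L) = p"
    and "alg_closed TYPE('L)"
    and "fin_gen_field K"
    and "drinfeld_module K \<phi>"
    and "\<not> constant_elem t"
    and "finite_index (M_deg K \<phi> t d) (End_sep K \<phi>)"
  shows "M_deg K \<phi> t d = End_sep K \<phi>"
proof (cases "degree (\<phi> t) = 0")
  case True
  then show ?thesis using deg0_false[OF assms(1,2,3,4,5,7)] by blast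
next
  case False
  then have "degree (\<phi> t) \<ge> 1" by simp
  then show ?thesis using main_eq[OF assms(1,2,3,4,5,7)] by simp
qed

end
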